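(* Let $M$ be a layered Markov Transition Model, $\pi_e$ a deterministic evaluation policy, $\Phi$ any aggregation scheme, and $\mu=(\mu_h)_{h\in[H]}$ offline distributions with $\mu_h\in\Delta(\mathcal{X}_h\times\mathcal{A})$. Suppose $M$ has pushforward concentrability coefficient $\mathsf{C}_{\mathrm{pf}}=\mathsf{C}_{\mathcal{X}}\mathsf{C}_{\mathcal{A}}$ with respect to $\mu$. Then for every $\epsilon>0$ (for which the maximum defining $\bar{\mathsf{C}}_\epsilon$ is over a nonempty set), $\bar{\mathsf{C}}_\epsilon(M,\Phi,\mu)\le\mathsf{C}_{\mathrm{pf}}$.
   Context: Markov Transition Model $M=(\mathcal{X},\mathcal{A},T,H,\rho)$ with finite layered state space $\mathcal{X}_1\cup\dots\cup\mathcal{X}_H$, finite actions, $T(\cdot|x,a)$ supported on $\mathcal{X}_{h+1}$ for $x\in\mathcal{X}_h$, $\rho\in\Delta(\mathcal{X}_1)$. For $x\in\mathcal{X}_h$ write $\mu(x)=\sum_a\mu_h(x,a)$ and $\mu(a|x)=\mu_h(x,a)/\mu(x)$. Pushforward concentrability: there are $\mathsf{C}_{\mathcal{A}},\mathsf{C}_{\mathcal{X}}>0$ with (a) $\mu(a|x)\ge 1/\mathsf{C}_{\mathcal{A}}$ for all $x,a$; (b) $T(x'|x,a)/\mu(x')<\mathsf{C}_{\mathcal{X}}$ and $\rho(x)/\mu(x)<\mathsf{C}_{\mathcal{X}}$ for all $x,x',a$; then $\mathsf{C}_{\mathrm{pf}}=\mathsf{C}_{\mathcal{X}}\mathsf{C}_{\mathcal{A}}$.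 Aggregation scheme: $\Phi=\Phi_1\cup\dots\cup\Phi_H$, $\Phi_h$ a partition of $\mathcal{X}_h$. Aggregated transitions, for $\phi\in\Phi_h,\phi'\in\Phi_{h+1}$: $\bar T(\phi'|\phi,\pi)=\frac{\sum_{x\in\phi}\sum_{x'\in\phi'}\sum_a\pi(a|x)\mu_h(x,a)T(x'|x,a)}{\sum_{x\in\phi}\sum_a\pi(a|x)\mu_h(x,a)}$. Aggregated occupancy $\bar d_h^\pi(\phi)$: law of $\phi_h$ under $\phi_1\sim\bar\rho$, $\phi_{i+1}\sim\bar T(\cdot|\phi_i,\pi)$, with $\bar\rho(\phi)=\sum_{x\in\phi}\rho(x)$. Aggregated concentrability: $\bar{\mathsf{C}}_\epsilon(M,\Phi,\mu)=\max_h\max\{\frac{\sum_{\phi\in\mathcal{I}}\bar d_h^{\pi_e}(\phi)}{\sum_{\phi\in\mathcal{I}}\sum_{x\in\phi}\mu_h(x,\pi_e(x))}:\mathcal{I}\subseteq\Phi_h,\ \sum_{\phi\in\mathcal{I}}\bar d_h^{\pi_e}(\phi)\ge\epsilon\}$. *)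

theory Defs
  imports Complex_Main
begin

text \<open>States of type 'x (finite), actions of type 'a (finite).
  Layers are given by a map layer :: 'x => nat with values in {1..H};
  X_h = {x. layer x = h}.  T x a x' is T(x'|x,a).\<close>

definition layered_MTM ::
  "nat \<Rightarrow> ('x::finite \<Rightarrow> nat) \<Rightarrow> ('x \<Rightarrow> 'a::finite \<Rightarrow> 'x \<Rightarrow> real) \<Rightarrow> ('x \<Rightarrow> real) \<Rightarrow> bool" where
  "layered_MTM H layer T \<rho> \<longleftrightarrow>
     1 \<le> H \<and> (\<forall>x. layer x \<in> {1..H}) \<and>
     (\<forall>x a x'. 0 \<le> T x a x') \<and>
     (\<forall>x a. layer x < H \<longrightarrow>
         (\<Sum>x'\<in>UNIV. T x a x') = 1 \<and> (\<forall>x'. T x a x' \<noteq> 0 \<longrightarrow> layer x' = layer x + 1)) \<and>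
     (\<forall>x. 0 \<le> \<rho> x) \<and> (\<Sum>x\<in>UNIV. \<rho> x) = 1 \<and> (\<forall>x. \<rho> x \<noteq> 0 \<longrightarrow> layer x = 1)"

text \<open>Offline distributions: mu x a = mu_h(x,a) for x in X_h; mu_h is a distribution on X_h x A.\<close>
definition offline_dists ::
  "nat \<Rightarrow> ('x::finite \<Rightarrow> nat) \<Rightarrow> ('x \<Rightarrow> 'a::finite \<Rightarrow> real) \<Rightarrow> bool" where
  "offline_dists H layer \<mu> \<longleftrightarrow>
     (\<forall>x a. 0 \<le> \<mu> x a) \<and>
     (\<forall>h\<in>{1..H}. (\<Sum>x\<in>{x. layer x = h}. \<Sum>a\<in>UNIV. \<mu> x a) = 1)"

definition state_marg :: "('x \<Rightarrow> 'a::finite \<Rightarrow> real) \<Rightarrow> 'x \<Rightarrow> real" where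
  "state_marg \<mu> x = (\<Sum>a\<in>UNIV. \<mu> x a)"

definition pushforward_conc ::
  "('x::finite \<Rightarrow> 'a::finite \<Rightarrow> 'x \<Rightarrow> real) \<Rightarrow> ('x \<Rightarrow> real) \<Rightarrow> ('x \<Rightarrow> 'a \<Rightarrow> real) \<Rightarrow> real \<Rightarrow> real \<Rightarrow> bool" where
  "pushforward_conc T \<rho> \<mu> CX CA \<longleftrightarrow>
     0 < CX \<and> 0 < CA \<and>
     (\<forall>x a. \<mu> x a / state_marg \<mu> x \<ge> 1 / CA) \<and>
     (\<forall>x x' a. T x a x' / state_marg \<mu> x' < CX) \<and>
     (\<forall>x. \<rho> x / state_marg \<mu> x < CX)"

definition aggregation_scheme ::
  "nat \<Rightarrow> ('x \<Rightarrow> nat) \<Rightarrow> 'x set set \<Rightarrow> bool" where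
  "aggregation_scheme H layer \<Phi> \<longleftrightarrow>
     (\<forall>\<phi>\<in>\<Phi>. \<phi> \<noteq> {} \<and> (\<exists>h\<in>{1..H}. \<forall>x\<in>\<phi>. layer x = h)) \<and>
     (\<forall>\<phi>\<in>\<Phi>. \<forall>\<psi>\<in>\<Phi>. \<phi> \<noteq> \<psi> \<longrightarrow> \<phi> \<inter> \<psi> = {}) \<and>
     \<Union>\<Phi> = UNIV"

definition blocks :: "('x \<Rightarrow> nat) \<Rightarrow> 'x set set \<Rightarrow> nat \<Rightarrow> 'x set set" where
  "blocks layer \<Phi> h = {\<phi>\<in>\<Phi>. \<forall>x\<in>\<phi>. layer x = h}"

text \<open>Policies: pi x a = pi(a|x). Deterministic policy pe induces the indicator policy.\<close>
definition det_policy :: "('x \<Rightarrow> 'a) \<Rightarrow> 'x \<Rightarrow> 'a \<Rightarrow> real" where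
  "det_policy pe x a = (if a = pe x then 1 else 0)"

definition agg_trans ::
  "('x::finite \<Rightarrow> 'a::finite \<Rightarrow> 'x \<Rightarrow> real) \<Rightarrow> ('x \<Rightarrow> 'a \<Rightarrow> real) \<Rightarrow> ('x \<Rightarrow> 'a \<Rightarrow> real)
    \<Rightarrow> 'x set \<Rightarrow> 'x set \<Rightarrow> real" where
  "agg_trans T \<mu> \<pi> \<phi>' \<phi> =
     (\<Sum>x\<in>\<phi>. \<Sum>x'\<in>\<phi>'. \<Sum>a\<in>UNIV. \<pi> x a * \<mu> x a * T x a x') /
     (\<Sum>x\<in>\<phi>. \<Sum>a\<in>UNIV. \<pi> x a * \<mu> x a)"

text \<open>Aggregated occupancy bar d_h^pi(phi), layers indexed from 1.\<close>
fun agg_occ ::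
  "('x \<Rightarrow> nat) \<Rightarrow> 'x set set \<Rightarrow> ('x::finite \<Rightarrow> 'a::finite \<Rightarrow> 'x \<Rightarrow> real) \<Rightarrow> ('x \<Rightarrow> real)
    \<Rightarrow> ('x \<Rightarrow> 'a \<Rightarrow> real) \<Rightarrow> ('x \<Rightarrow> 'a \<Rightarrow> real) \<Rightarrow> nat \<Rightarrow> 'x set \<Rightarrow> real" where
  "agg_occ layer \<Phi> T \<rho> \<mu> \<pi> 0 \<phi> = 0"
| "agg_occ layer \<Phi> T \<rho> \<mu> \<pi> (Suc 0) \<phi> = (\<Sum>x\<in>\<phi>. \<rho> x)"
| "agg_occ layer \<Phi> T \<rho> \<mu> \<pi> (Suc (Suc h)) \<phi>' =
     (\<Sum>\<phi>\<in>blocks layer \<Phi> (Suc h). agg_occ layer \<Phi> T \<rho> \<mu> \<pi> (Suc h) \<phi> * agg_trans T \<mu> \<pi> \<phi>' \<phi>)"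

definition agg_conc_set ::
  "nat \<Rightarrow> ('x \<Rightarrow> nat) \<Rightarrow> 'x set set \<Rightarrow> ('x::finite \<Rightarrow> 'a::finite \<Rightarrow> 'x \<Rightarrow> real) \<Rightarrow> ('x \<Rightarrow> real)
    \<Rightarrow> ('x \<Rightarrow> 'a \<Rightarrow> real) \<Rightarrow> ('x \<Rightarrow> 'a) \<Rightarrow> real \<Rightarrow> real set" where
  "agg_conc_set H layer \<Phi> T \<rho> \<mu> pe \<epsilon> =
     {(\<Sum>\<phi>\<in>I. agg_occ layer \<Phi> T \<rho> \<mu> (det_policy pe) h \<phi>) /
      (\<Sum>\<phi>\<in>I. \<Sum>x\<in>\<phi>. \<mu> x (pe x)) | h I.
        h \<in> {1..H} \<and> I \<subseteq> blocks layer \<Phi> h \<and>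
        (\<Sum>\<phi>\<in>I. agg_occ layer \<Phi> T \<rho> \<mu> (det_policy pe) h \<phi>) \<ge> \<epsilon>}"

definition agg_conc ::
  "nat \<Rightarrow> ('x \<Rightarrow> nat) \<Rightarrow> 'x set set \<Rightarrow> ('x::finite \<Rightarrow> 'a::finite \<Rightarrow> 'x \<Rightarrow> real) \<Rightarrow> ('x \<Rightarrow> real)
    \<Rightarrow> ('x \<Rightarrow> 'a \<Rightarrow> real) \<Rightarrow> ('x \<Rightarrow> 'a) \<Rightarrow> real \<Rightarrow> real" where
  "agg_conc H layer \<Phi> T \<rho> \<mu> pe \<epsilon> = Max (agg_conc_set H layer \<Phi> T \<rho> \<mu> pe \<epsilon>)"

end

theory Submission
  imports Defs
begin

lemma avg_le:
  fixes w g :: "'b \<Rightarrow> real"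
  assumes "finite A" "A \<noteq> {}" "\<And>x. x \<in> A \<Longrightarrow> w x > 0" "\<And>x. x \<in> A \<Longrightarrow> g x \<le> c"
  shows "(\<Sum>x\<in>A. w x * g x) / (\<Sum>x\<in>A. w x) \<le> c"
proof -
  have pos: "(\<Sum>x\<in>A. w x) > 0" using assms by (intro sum_pos) auto
  have "(\<Sum>x\<in>A. w x * g x) \<le> (\<Sum>x\<in>A. w x * c)"
    using assms by (intro sum_mono mult_left_mono) (auto intro: less_imp_le)
  also have "\<dots> = c * (\<Sum>x\<in>A. w x)" by (simp add: sum_distrib_left mult.commute)
  finally show ?thesis using pos by (simp add: pos_divide_le_eq)
qed

lemma agg_trans_eq:
  "agg_trans T \<mu> (det_policy pe) \<phi>' \<phi> =
    (\<Sum>x\<in>\<phi>. \<mu> x (pe x) * (\<Sum>x'\<in>\<phi>'. T x (pe x) x')) / (\<Sum>x\<in>\<phi>. \<mu> x (pe x))"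
proof -
  have "\<And>x x'. (\<Sum>a\<in>UNIV. (if a = pe x then 1 else 0) * \<mu> x a * T x a x') = \<mu> x (pe x) * T x (pe x) x'"
  proof -
    fix x x'
    have "(\<lambda>a. (if a = pe x then 1 else 0) * \<mu> x a * T x a x') = (\<lambda>a. if a = pe x then \<mu> x a * T x a x' else 0)" (is "_ = ?g") by auto
    then show "(\<Sum>a\<in>UNIV. (if a = pe x then 1 else 0) * \<mu> x a * T x a x') = \<mu> x (pe x) * T x (pe x) x'" by (simp only: \<open>_ = ?g\<close>) simp
  qed
  moreover have "\<And>x. (\<Sum>a\<in>UNIV. (if a = pe x then 1 else 0) * \<mu> x a) = \<mu> x (pe x)"
    by (simp add: of_bool_def[symmetric] sum.delta)
  ultimately show ?thesis unfolding agg_trans_def det_policy_def by (simp only: sum_distrib_left)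
qed

lemma block_sum_le:
  fixes f :: "'x::finite \<Rightarrow> real"
  assumes "aggregation_scheme H layer \<Phi>" "\<And>x. f x \<ge> 0"
  shows "(\<Sum>\<phi>\<in>blocks layer \<Phi> k. \<Sum>x\<in>\<phi>. f x) \<le> (\<Sum>x\<in>UNIV. f x)"
proof -
  have "(\<Sum>\<phi>\<in>blocks layer \<Phi> k. \<Sum>x\<in>\<phi>. f x) = (\<Sum>x\<in>\<Union>(blocks layer \<Phi> k). f x)"
    using assms(1) unfolding aggregation_scheme_def blocks_def
    by (subst sum.Union_disjoint) (auto simp: pairwise_def disjnt_def)
  also have "\<dots> \<le> (\<Sum>x\<in>UNIV. f x)" using assms(2) by (intro sum_mono2) auto
  finally show ?thesis .
qed

theorem mainTheorem8:
  fixes H :: nat and layer :: "'x::finite \<Rightarrow> nat"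
    and T :: "'x \<Rightarrow> 'a::finite \<Rightarrow> 'x \<Rightarrow> real" and \<rho> :: "'x \<Rightarrow> real"
    and \<mu> :: "'x \<Rightarrow> 'a \<Rightarrow> real" and pe :: "'x \<Rightarrow> 'a"
    and \<Phi> :: "'x set set" and CX CA \<epsilon> :: real
  assumes "layered_MTM H layer T \<rho>"
    and "offline_dists H layer \<mu>"
    and "aggregation_scheme H layer \<Phi>"
    and "pushforward_conc T \<rho> \<mu> CX CA"
    and "\<epsilon> > 0"
    and "agg_conc_set H layer \<Phi> T \<rho> \<mu> pe \<epsilon> \<noteq> {}"
  shows "agg_conc H layer \<Phi> T \<rho> \<mu> pe \<epsilon> \<le> CX * CA"
proof -
  note M = assms(1)[unfolded layered_MTM_def]
  note O = assms(2)[unfolded offline_dists_def]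
  note A = assms(3)
  note P = assms(4)[unfolded pushforward_conc_def]
  define d where "d = agg_occ layer \<Phi> T \<rho> \<mu> (det_policy pe)"
  define sm where "sm = state_marg \<mu>"
  define tr where "tr = agg_trans T \<mu> (det_policy pe)"
  have CX: "CX > 0" and CA: "CA > 0" using P by auto
  have smnn: "sm x \<ge> 0" for x using O unfolding sm_def state_marg_def by (simp add: sum_nonneg)
  have smpos: "sm x > 0" for x
  proof -
    have "\<mu> x (pe x) / sm x \<ge> 1 / CA" using P unfolding sm_def by auto
    moreover have "1 / CA > 0" using CA by simp
    ultimately have "sm x \<noteq> 0" by auto
    thus ?thesis using smnn[of x] by simp
  qed
  have smw: "sm x \<le> CA * \<mu> x (pe x)" for x
  proof -
    have "\<mu> x (pe x) / sm x \<ge> 1 / CA" using P unfolding sm_def by auto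
    thus ?thesis using smpos[of x] CA by (simp add: field_simps)
  qed
  have wpos: "\<mu> x (pe x) > 0" for x
  proof -
    have "CA * \<mu> x (pe x) > 0" using smw[of x] smpos[of x] by linarith
    thus ?thesis using CA by (simp add: zero_less_mult_iff)
  qed
  have rho_le: "\<rho> x \<le> CX * sm x" for x
  proof -
    have "\<rho> x / sm x < CX" using P unfolding sm_def by auto
    thus ?thesis using smpos[of x] by (simp add: divide_less_eq)
  qed
  have T_le: "T x a x' \<le> CX * sm x'" for x a x'
  proof -
    have "T x a x' / sm x' < CX" using P unfolding sm_def by auto
    thus ?thesis using smpos[of x'] by (simp add: divide_less_eq)
  qed
  have blk_ne: "\<phi> \<noteq> {}" if "\<phi> \<in> blocks layer \<Phi> k" for \<phi> k
    using that A unfolding blocks_def aggregation_scheme_def by auto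
  have fin_blk: "finite (blocks layer \<Phi> k)" for k
    by (rule finite_subset[of _ "Pow UNIV"]) auto
  have tr_nn: "tr \<phi>' \<phi> \<ge> 0" for \<phi>' \<phi>
    unfolding tr_def agg_trans_eq using M wpos
    by (intro divide_nonneg_nonneg sum_nonneg mult_nonneg_nonneg) (auto intro: less_imp_le)
  have tr_le: "tr \<phi>' \<phi> \<le> CX * (\<Sum>x'\<in>\<phi>'. sm x')" if "\<phi> \<in> blocks layer \<Phi> k" for \<phi>' \<phi> k
    unfolding tr_def agg_trans_eq
  proof (rule avg_le)
    show "\<phi> \<noteq> {}" using blk_ne that .
    fix x
    show "(\<Sum>x'\<in>\<phi>'. T x (pe x) x') \<le> CX * (\<Sum>x'\<in>\<phi>'. sm x')"
      unfolding sum_distrib_left by (rule sum_mono) (rule T_le)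
  qed (auto intro: wpos)
  have tr_mass: "(\<Sum>\<phi>'\<in>blocks layer \<Phi> k'. tr \<phi>' \<phi>) \<le> 1"
    if "\<phi> \<in> blocks layer \<Phi> k" "k < H" for \<phi> k k'
  proof -
    have "(\<Sum>\<phi>'\<in>blocks layer \<Phi> k'. tr \<phi>' \<phi>) =
      (\<Sum>x\<in>\<phi>. \<mu> x (pe x) * (\<Sum>\<phi>'\<in>blocks layer \<Phi> k'. \<Sum>x'\<in>\<phi>'. T x (pe x) x')) / (\<Sum>x\<in>\<phi>. \<mu> x (pe x))"
      unfolding tr_def agg_trans_eq sum_divide_distrib[symmetric] sum_distrib_left
      by (rule arg_cong[where f="\<lambda>t. t / _"]) (rule sum.swap)
    also have "\<dots> \<le> 1"
    proof (rule avg_le)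
      show "\<phi> \<noteq> {}" using blk_ne that(1) .
      fix x assume "x \<in> \<phi>"
      hence "layer x = k" using that(1) unfolding blocks_def by auto
      hence "layer x < H" using that(2) by simp
      hence "(\<Sum>x'\<in>UNIV. T x (pe x) x') = 1" using M by auto
      moreover have "(\<Sum>\<phi>'\<in>blocks layer \<Phi> k'. \<Sum>x'\<in>\<phi>'. T x (pe x) x') \<le> (\<Sum>x'\<in>UNIV. T x (pe x) x')"
        by (rule block_sum_le[OF A]) (use M in auto)
      ultimately show "(\<Sum>\<phi>'\<in>blocks layer \<Phi> k'. \<Sum>x'\<in>\<phi>'. T x (pe x) x') \<le> 1" by simp
    qed (auto intro: wpos)
    finally show ?thesis .
  qed
  have main: "1 \<le> k \<longrightarrow> k \<le> H \<longrightarrow> (\<forall>\<phi>. 0 \<le> d k \<phi>) \<and> (\<Sum>\<phi>\<in>blocks layer \<Phi> k. d k \<phi>) \<le> 1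
     \<and> (\<forall>\<phi>. d k \<phi> \<le> CX * (\<Sum>x\<in>\<phi>. sm x))" for k
  proof (induction k rule: nat_less_induct)
    case (1 k)
    show ?case
    proof (cases k)
      case 0 then show ?thesis by simp
    next
      case (Suc j)
      show ?thesis
      proof (cases j)
        case 0
        have "(\<Sum>\<phi>\<in>blocks layer \<Phi> 1. d 1 \<phi>) \<le> (\<Sum>x\<in>UNIV. \<rho> x)"
          unfolding d_def using block_sum_le[OF A, of \<rho> 1] M by simp
        moreover have "d 1 \<phi> \<ge> 0" for \<phi> unfolding d_def using M by (simp add: sum_nonneg)
        moreover have "d 1 \<phi> \<le> CX * (\<Sum>x\<in>\<phi>. sm x)" for \<phi>
          unfolding d_def sum_distrib_left by (simp add: sum_mono rho_le)
        ultimately show ?thesis using Suc 0 M by simp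
      next
        case (Suc i)
        have k: "k = Suc (Suc i)" using \<open>k = Suc j\<close> Suc by simp
        show ?thesis
        proof (intro impI)
          assume "k \<le> H"
          have IH: "(\<forall>\<phi>. 0 \<le> d (Suc i) \<phi>) \<and> (\<Sum>\<phi>\<in>blocks layer \<Phi> (Suc i). d (Suc i) \<phi>) \<le> 1
             \<and> (\<forall>\<phi>. d (Suc i) \<phi> \<le> CX * (\<Sum>x\<in>\<phi>. sm x))"
            using "1.IH"[rule_format, of "Suc i"] k \<open>k \<le> H\<close> by simp
          have dk: "d k \<phi>' = (\<Sum>\<phi>\<in>blocks layer \<Phi> (Suc i). d (Suc i) \<phi> * tr \<phi>' \<phi>)" for \<phi>'
            unfolding d_def tr_def k by simp
          have nn: "0 \<le> d k \<phi>'" for \<phi>'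
            unfolding dk using IH tr_nn by (intro sum_nonneg mult_nonneg_nonneg) auto
          have mass: "(\<Sum>\<phi>'\<in>blocks layer \<Phi> k. d k \<phi>') \<le> 1"
          proof -
            have "(\<Sum>\<phi>'\<in>blocks layer \<Phi> k. d k \<phi>') =
               (\<Sum>\<phi>\<in>blocks layer \<Phi> (Suc i). d (Suc i) \<phi> * (\<Sum>\<phi>'\<in>blocks layer \<Phi> k. tr \<phi>' \<phi>))"
              unfolding dk sum_distrib_left by (rule sum.swap)
            also have "\<dots> \<le> (\<Sum>\<phi>\<in>blocks layer \<Phi> (Suc i). d (Suc i) \<phi> * 1)"
              using IH tr_mass[of _ "Suc i" k] k \<open>k \<le> H\<close>
              by (intro sum_mono mult_left_mono) auto
            also have "\<dots> \<le> 1" using IH by simp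
            finally show ?thesis .
          qed
          have bnd: "d k \<phi>' \<le> CX * (\<Sum>x\<in>\<phi>'. sm x)" for \<phi>'
          proof -
            have "d k \<phi>' \<le> (\<Sum>\<phi>\<in>blocks layer \<Phi> (Suc i). d (Suc i) \<phi> * (CX * (\<Sum>x\<in>\<phi>'. sm x)))"
              unfolding dk using IH tr_le by (intro sum_mono mult_left_mono) auto
            also have "\<dots> = (\<Sum>\<phi>\<in>blocks layer \<Phi> (Suc i). d (Suc i) \<phi>) * (CX * (\<Sum>x\<in>\<phi>'. sm x))"
              by (simp add: sum_distrib_right)
            also have "\<dots> \<le> 1 * (CX * (\<Sum>x\<in>\<phi>'. sm x))"
              using IH CX smnn by (intro mult_right_mono) (auto intro!: sum_nonneg mult_nonneg_nonneg simp: less_imp_le)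
            finally show ?thesis by simp
          qed
          show "(\<forall>\<phi>. 0 \<le> d k \<phi>) \<and> (\<Sum>\<phi>\<in>blocks layer \<Phi> k. d k \<phi>) \<le> 1
             \<and> (\<forall>\<phi>. d k \<phi> \<le> CX * (\<Sum>x\<in>\<phi>. sm x))" using nn mass bnd by auto
        qed
      qed
    qed
  qed
  let ?S = "agg_conc_set H layer \<Phi> T \<rho> \<mu> pe \<epsilon>"
  have finS: "finite ?S"
  proof -
    have "?S \<subseteq> (\<lambda>(h, I). (\<Sum>\<phi>\<in>I. d h \<phi>) / (\<Sum>\<phi>\<in>I. \<Sum>x\<in>\<phi>. \<mu> x (pe x))) ` ({1..H} \<times> Pow (Pow UNIV))"
      unfolding agg_conc_set_def d_def by auto
    moreover have "finite ({1..H} \<times> Pow (Pow (UNIV::'x set)))" by simp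
    ultimately show ?thesis by (meson finite_imageI finite_subset)
  qed
  have "r \<le> CX * CA" if rS: "r \<in> ?S" for r
  proof -
    obtain h I where r: "r = (\<Sum>\<phi>\<in>I. d h \<phi>) / (\<Sum>\<phi>\<in>I. \<Sum>x\<in>\<phi>. \<mu> x (pe x))"
      and h: "h \<in> {1..H}" and I: "I \<subseteq> blocks layer \<Phi> h" and eps: "(\<Sum>\<phi>\<in>I. d h \<phi>) \<ge> \<epsilon>"
      using rS[unfolded agg_conc_set_def] unfolding d_def by blast
    have finI: "finite I" using I fin_blk finite_subset by blast
    have "I \<noteq> {}" using eps assms(5) by auto
    then obtain \<phi>0 where "\<phi>0 \<in> I" by auto
    then obtain x0 where "x0 \<in> \<phi>0" using blk_ne I by blast
    have den_pos: "(\<Sum>\<phi>\<in>I. \<Sum>x\<in>\<phi>. \<mu> x (pe x)) > 0"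
    proof -
      have "0 < (\<Sum>x\<in>\<phi>0. \<mu> x (pe x))"
        using \<open>x0 \<in> \<phi>0\<close> wpos by (intro sum_pos) auto
      also have "\<dots> \<le> (\<Sum>\<phi>\<in>I. \<Sum>x\<in>\<phi>. \<mu> x (pe x))"
        using finI \<open>\<phi>0 \<in> I\<close> wpos
        by (intro member_le_sum) (auto intro: sum_nonneg less_imp_le)
      finally show ?thesis .
    qed
    have "(\<Sum>\<phi>\<in>I. d h \<phi>) \<le> (\<Sum>\<phi>\<in>I. CX * (\<Sum>x\<in>\<phi>. sm x))"
      using main[of h] h by (intro sum_mono) auto
    also have "\<dots> \<le> (\<Sum>\<phi>\<in>I. CX * (\<Sum>x\<in>\<phi>. CA * \<mu> x (pe x)))"
      using CX smw by (intro sum_mono mult_left_mono) auto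
    also have "\<dots> = CX * CA * (\<Sum>\<phi>\<in>I. \<Sum>x\<in>\<phi>. \<mu> x (pe x))"
      by (simp add: sum_distrib_left mult.assoc)
    finally show ?thesis unfolding r using den_pos by (simp add: pos_divide_le_eq)
  qed
  then show ?thesis unfolding agg_conc_def using finS assms(6) by simp
qed

end
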